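(* For every even integer $n\ge 4$, $\chi_{ei}(C_3\square C_n)=6$.
   Context: All graphs are finite and simple. $C_k$ denotes the cycle on $k$ vertices. A path $P_4$ in $G$ is a sequence $uxyv$ of four distinct vertices with $ux,xy,yv\in E(G)$; $u,v$ are its end vertices. An $e$-injective $k$-coloring of $G$ is a function $f:V(G)\to\{1,\dots,k\}$ with $f(u)\ne f(v)$ whenever $u,v$ are the end vertices of some path $P_4$ in $G$; $\chi_{ei}(G)$ is the least such $k$. In the Cartesian product $G\square H$ two vertices are adjacent if they are adjacent in one coordinate and equal in the other. *)

theory Defs
  imports Main
begin

text \<open>A finite simple graph is given by a vertex set V and a symmetric irreflexive
  adjacency relation E on V.\<close>

definition cycle_verts :: "nat \<Rightarrow> nat set" where
  "cycle_verts k = {0..<k}"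

definition cycle_adj :: "nat \<Rightarrow> nat \<Rightarrow> nat \<Rightarrow> bool" where
  "cycle_adj k i j \<longleftrightarrow> i < k \<and> j < k \<and> (j = (i + 1) mod k \<or> i = (j + 1) mod k)"

definition box_verts :: "'a set \<Rightarrow> 'b set \<Rightarrow> ('a \<times> 'b) set" where
  "box_verts V1 V2 = V1 \<times> V2"

definition box_adj :: "'a set \<Rightarrow> ('a \<Rightarrow> 'a \<Rightarrow> bool) \<Rightarrow> 'b set \<Rightarrow> ('b \<Rightarrow> 'b \<Rightarrow> bool)
    \<Rightarrow> 'a \<times> 'b \<Rightarrow> 'a \<times> 'b \<Rightarrow> bool" where
  "box_adj V1 E1 V2 E2 p q \<longleftrightarrow> p \<in> V1 \<times> V2 \<and> q \<in> V1 \<times> V2 \<and>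
     ((E1 (fst p) (fst q) \<and> snd p = snd q) \<or> (fst p = fst q \<and> E2 (snd p) (snd q)))"

definition P4_ends :: "'a set \<Rightarrow> ('a \<Rightarrow> 'a \<Rightarrow> bool) \<Rightarrow> 'a \<Rightarrow> 'a \<Rightarrow> bool" where
  "P4_ends V E u v \<longleftrightarrow> (\<exists>x y. u \<in> V \<and> x \<in> V \<and> y \<in> V \<and> v \<in> V \<and>
      distinct [u, x, y, v] \<and> E u x \<and> E x y \<and> E y v)"

definition e_injective_coloring :: "'a set \<Rightarrow> ('a \<Rightarrow> 'a \<Rightarrow> bool) \<Rightarrow> nat \<Rightarrow> ('a \<Rightarrow> nat) \<Rightarrow> bool" where
  "e_injective_coloring V E k f \<longleftrightarrow>
     (\<forall>v\<in>V. f v \<in> {1..k}) \<and> (\<forall>u v. P4_ends V E u v \<longrightarrow> f u \<noteq> f v)"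

definition chi_ei :: "'a set \<Rightarrow> ('a \<Rightarrow> 'a \<Rightarrow> bool) \<Rightarrow> nat" where
  "chi_ei V E = (LEAST k. \<exists>f. e_injective_coloring V E k f)"

end

theory Submission
  imports Defs
begin

abbreviation "VV n \<equiv> box_verts (cycle_verts 3) (cycle_verts n)"
abbreviation "EE n \<equiv> box_adj (cycle_verts 3) (cycle_adj 3) (cycle_verts n) (cycle_adj n)"

lemma cyc_par:
  assumes "even n" "cycle_adj n i j"
  shows "odd (i + j)"
proof -
  have i: "i < n" "j < n" using assms(2) unfolding cycle_adj_def by auto
  have "j = (i + 1) mod n \<or> i = (j + 1) mod n" using assms(2) unfolding cycle_adj_def by auto
  then show ?thesis
  proof
    assume h: "j = (i + 1) mod n"
    show ?thesis
    proof (cases "i + 1 < n")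
      case True then show ?thesis using h by simp
    next
      case False then have "i + 1 = n" using i by simp
      then show ?thesis using h assms(1) by auto
    qed
  next
    assume h: "i = (j + 1) mod n"
    show ?thesis
    proof (cases "j + 1 < n")
      case True then show ?thesis using h by simp
    next
      case False then have "j + 1 = n" using i by simp
      then show ?thesis using h assms(1) by auto
    qed
  qed
qed

lemma cyc3_ne: "cycle_adj 3 a b \<Longrightarrow> a \<noteq> b"
  unfolding cycle_adj_def by (clarsimp; presburger)

lemma edge_cases:
  assumes "even n" "EE n p q"
  shows "(fst p \<noteq> fst q \<and> snd p = snd q) \<or> (fst p = fst q \<and> (even (snd p) \<noteq> even (snd q)))"
proof -
  have "(cycle_adj 3 (fst p) (fst q) \<and> snd p = snd q) \<or> (fst p = fst q \<and> cycle_adj n (snd p) (snd q))"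
    using assms(2) unfolding box_adj_def by simp
  then show ?thesis
  proof
    assume "cycle_adj 3 (fst p) (fst q) \<and> snd p = snd q"
    then show ?thesis using cyc3_ne by blast
  next
    assume "fst p = fst q \<and> cycle_adj n (snd p) (snd q)"
    then show ?thesis using cyc_par[OF assms(1), of "snd p" "snd q"] by auto
  qed
qed

lemma col_aux: "(a::nat) < 3 \<Longrightarrow> b < 3 \<Longrightarrow> a + 3 * (i mod 2) + 1 = b + 3 * (j mod 2) + 1 \<Longrightarrow> a = b \<and> (even i = even j)"
proof -
  assume h: "(a::nat) < 3" "b < 3" "a + 3 * (i mod 2) + 1 = b + 3 * (j mod 2) + 1"
  have "i mod 2 = 0 \<or> i mod 2 = 1" "j mod 2 = 0 \<or> j mod 2 = 1" by arith+
  then show ?thesis using h by (auto simp: even_iff_mod_2_eq_zero)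
qed

definition col :: "nat \<times> nat \<Rightarrow> nat" where
  "col p = fst p + 3 * (snd p mod 2) + 1"

lemma col_upper:
  assumes "even n"
  shows "e_injective_coloring (VV n) (EE n) 6 col"
  unfolding e_injective_coloring_def
proof (intro conjI allI impI ballI)
  fix v assume "v \<in> VV n"
  then show "col v \<in> {1..6}" unfolding box_verts_def cycle_verts_def col_def by auto
next
  fix u v assume "P4_ends (VV n) (EE n) u v"
  then obtain x y where d: "distinct [u, x, y, v]" and e: "EE n u x" "EE n x y" "EE n y v"
    and uvV: "u \<in> VV n" "v \<in> VV n"
    unfolding P4_ends_def by blast
  have fu: "fst u < 3" "fst v < 3" using uvV unfolding box_verts_def cycle_verts_def by auto
  have 1: "(fst u \<noteq> fst x \<and> snd u = snd x) \<or> (fst u = fst x \<and> (even (snd u) \<noteq> even (snd x)))"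
    using edge_cases[OF assms e(1)] .
  have 2: "(fst x \<noteq> fst y \<and> snd x = snd y) \<or> (fst x = fst y \<and> (even (snd x) \<noteq> even (snd y)))"
    using edge_cases[OF assms e(2)] .
  have 3: "(fst y \<noteq> fst v \<and> snd y = snd v) \<or> (fst y = fst v \<and> (even (snd y) \<noteq> even (snd v)))"
    using edge_cases[OF assms e(3)] .
  have uv: "u \<noteq> v" using d by auto
  show "col u \<noteq> col v"
  proof
    assume cc: "col u = col v"
    have r: "fst u = fst v" and p: "even (snd u) = even (snd v)"
      using col_aux[OF fu] cc unfolding col_def by blast+
    have "snd u = snd v" using 1 2 3 r p
      by (elim disjE) auto
    then show False using r uv by (simp add: prod_eq_iff)
  qed
qed

lemma c3: "a < 3 \<Longrightarrow> b < 3 \<Longrightarrow> a \<noteq> b \<Longrightarrow> cycle_adj 3 a b"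
proof -
  assume h: "a < 3" "b < 3" "a \<noteq> b"
  then have "a = 0 \<or> a = 1 \<or> a = 2" "b = 0 \<or> b = 1 \<or> b = 2" by auto
  then show ?thesis using h unfolding cycle_adj_def by auto
qed

lemma cn01: "n \<ge> 4 \<Longrightarrow> cycle_adj n 0 1 \<and> cycle_adj n 1 0"
  unfolding cycle_adj_def by simp

lemma edgeR: "n \<ge> 4 \<Longrightarrow> a < 3 \<Longrightarrow> b < 3 \<Longrightarrow> a \<noteq> b \<Longrightarrow> i < 2 \<Longrightarrow> EE n (a, i) (b, i)"
  unfolding box_adj_def box_verts_def cycle_verts_def using c3 by auto

lemma edgeC: "n \<ge> 4 \<Longrightarrow> a < 3 \<Longrightarrow> EE n (a, 0) (a, 1) \<and> EE n (a, 1) (a, 0)"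
  unfolding box_adj_def box_verts_def cycle_verts_def using cn01 by auto

lemma vin: "n \<ge> 4 \<Longrightarrow> a < 3 \<Longrightarrow> i < 2 \<Longrightarrow> (a, i) \<in> VV n"
  unfolding box_verts_def cycle_verts_def by auto

lemma L1: assumes "n \<ge> 4" "a < 3" "b < 3" "a \<noteq> b" "i < 2"
  shows "P4_ends (VV n) (EE n) (a, i) (b, i)"
proof (cases "i = 0")
  case True then show ?thesis unfolding P4_ends_def
    using assms vin[OF assms(1)] edgeR[OF assms(1)] edgeC[OF assms(1)]
    by (intro exI[of _ "(a, 1::nat)"] exI[of _ "(b, 1::nat)"]) auto
next
  case False then have "i = 1" using assms by auto
  then show ?thesis unfolding P4_ends_def
    using assms vin[OF assms(1)] edgeR[OF assms(1)] edgeC[OF assms(1)]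
    by (intro exI[of _ "(a, 0::nat)"] exI[of _ "(b, 0::nat)"]) auto
qed

lemma L3: assumes "n \<ge> 4" "a < 3"
  shows "P4_ends (VV n) (EE n) (a, 0) (a, 1)"
proof -
  have c: "(a + 1) mod 3 < 3" "(a + 1) mod 3 \<noteq> a" using assms by presburger+
  show ?thesis unfolding P4_ends_def
    using assms c vin[OF assms(1)] edgeR[OF assms(1)] edgeC[OF assms(1)]
    by (intro exI[of _ "((a + 1) mod 3, 0::nat)"] exI[of _ "((a + 1) mod 3, 1::nat)"]) auto
qed

lemma L4: assumes "n \<ge> 4" "a < 3" "b < 3" "a \<noteq> b"
  shows "P4_ends (VV n) (EE n) (a, 0) (b, 1)"
proof -
  have c: "3 - a - b < 3" "3 - a - b \<noteq> a" "3 - a - b \<noteq> b" using assms by presburger+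
  show ?thesis unfolding P4_ends_def
    using assms c vin[OF assms(1)] edgeR[OF assms(1)] edgeC[OF assms(1)]
    by (intro exI[of _ "(3 - a - b, 0::nat)"] exI[of _ "(3 - a - b, 1::nat)"]) auto
qed

lemma lower:
  assumes "n \<ge> 4" "e_injective_coloring (VV n) (EE n) k f"
  shows "6 \<le> k"
proof -
  let ?S = "{0..<3::nat} \<times> {0..<2::nat}"
  have ne: "f u \<noteq> f v" if "P4_ends (VV n) (EE n) u v" for u v
    using assms(2) that unfolding e_injective_coloring_def by blast
  have "inj_on f ?S"
  proof (rule inj_onI)
    fix u v assume u: "u \<in> ?S" and v: "v \<in> ?S" and eq: "f u = f v"
    show "u = v"
    proof (rule ccontr)
      assume uv: "u \<noteq> v"
      obtain a i where ua: "u = (a, i)" "a < 3" "i < 2" using u by auto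
      obtain b j where vb: "v = (b, j)" "b < 3" "j < 2" using v by auto
      have "P4_ends (VV n) (EE n) u v \<or> P4_ends (VV n) (EE n) v u"
      proof (cases "i = j")
        case True
        then have "a \<noteq> b" using uv ua vb by auto
        then show ?thesis using L1[OF assms(1) ua(2) vb(2) _ ua(3)] ua vb True by auto
      next
        case False
        then have "(i = 0 \<and> j = 1) \<or> (i = 1 \<and> j = 0)" using ua vb by auto
        then show ?thesis
        proof
          assume h: "i = 0 \<and> j = 1"
          show ?thesis
          proof (cases "a = b")
            case True then show ?thesis using L3[OF assms(1) ua(2)] ua vb h by auto
          next
            case False then show ?thesis using L4[OF assms(1) ua(2) vb(2)] ua vb h by auto
          qed
        next
          assume h: "i = 1 \<and> j = 0"
          show ?thesis
          proof (cases "a = b")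
            case True then show ?thesis using L3[OF assms(1) ua(2)] ua vb h by auto
          next
            case False then show ?thesis using L4[OF assms(1) vb(2) ua(2)] ua vb h by auto
          qed
        qed
      qed
      then show False using ne eq by metis
    qed
  qed
  moreover have "f ` ?S \<subseteq> {1..k}"
  proof
    fix c assume "c \<in> f ` ?S"
    then obtain u where "u \<in> ?S" "c = f u" by auto
    then have "u \<in> VV n" unfolding box_verts_def cycle_verts_def using assms(1) by auto
    then show "c \<in> {1..k}" using assms(2) \<open>c = f u\<close> unfolding e_injective_coloring_def by blast
  qed
  ultimately have "card ?S \<le> card {1..k}"
    using card_inj_on_le by (metis finite_atLeastAtMost)
  then show ?thesis by simp
qed

theorem theorem4p6:
  fixes n :: nat
  assumes "even n" and "n \<ge> 4"
  shows "chi_ei (box_verts (cycle_verts 3) (cycle_verts n))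
                (box_adj (cycle_verts 3) (cycle_adj 3) (cycle_verts n) (cycle_adj n)) = 6"
  unfolding chi_ei_def
proof (rule Least_equality)
  show "\<exists>f. e_injective_coloring (VV n) (EE n) 6 f" using col_upper[OF assms(1)] by blast
next
  fix k assume "\<exists>f. e_injective_coloring (VV n) (EE n) k f"
  then show "6 \<le> k" using lower[OF assms(2)] by blast
qed

end
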